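(* Let $G$ be a finite $p$-group with trivial Schur multiplier $\mathrm{H}^2(G,\mathbb{C}^\times)=1$ and $|Z(G)|=p$. Then $G$ has no faithful irreducible projective representation (so $\tau_{irr}(G)$ does not exist), and $\tau(G)=\delta(G)+1$.
   Context: A projective representation of $G$ is an $\alpha$-representation for some cocycle $\alpha$: a map $\rho:G\to\mathrm{GL}_n(\mathbb{C})$ with $\rho(1)=I$ and $\rho(g)\rho(h)=\alpha(g,h)\rho(gh)$; it is faithful if the only $g$ with $\rho(g)$ scalar is $g=1$. $\tau(G)$ is the least degree of a faithful projective representation; $\tau_{irr}(G)$ the least degree of a faithful irreducible projective representation (if one exists); $\delta(G)$ the least degree of a faithful ordinary representation. *)

theory Defs
  imports "HOL-Algebra.Group" "Jordan_Normal_Form.Matrix"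
begin

definition grp_center :: "('a, 'b) monoid_scheme \<Rightarrow> 'a set" where
  "grp_center G = {z \<in> carrier G. \<forall>g \<in> carrier G. z \<otimes>\<^bsub>G\<^esub> g = g \<otimes>\<^bsub>G\<^esub> z}"

definition p_group :: "('a, 'b) monoid_scheme \<Rightarrow> nat \<Rightarrow> bool" where
  "p_group G p \<longleftrightarrow> group G \<and> finite (carrier G) \<and> prime p \<and> (\<exists>k. card (carrier G) = p ^ k)"

definition cocycle :: "('a, 'b) monoid_scheme \<Rightarrow> ('a \<Rightarrow> 'a \<Rightarrow> complex) \<Rightarrow> bool" where
  "cocycle G \<alpha> \<longleftrightarrow>
     (\<forall>g \<in> carrier G. \<forall>h \<in> carrier G. \<alpha> g h \<noteq> 0) \<and>
     (\<forall>g \<in> carrier G. \<forall>h \<in> carrier G. \<forall>k \<in> carrier G.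
        \<alpha> g h * \<alpha> (g \<otimes>\<^bsub>G\<^esub> h) k = \<alpha> h k * \<alpha> g (h \<otimes>\<^bsub>G\<^esub> k))"

definition coboundary :: "('a, 'b) monoid_scheme \<Rightarrow> ('a \<Rightarrow> 'a \<Rightarrow> complex) \<Rightarrow> bool" where
  "coboundary G \<alpha> \<longleftrightarrow>
     (\<exists>\<beta>. (\<forall>g \<in> carrier G. \<beta> g \<noteq> 0) \<and>
          (\<forall>g \<in> carrier G. \<forall>h \<in> carrier G. \<alpha> g h = \<beta> g * \<beta> h / \<beta> (g \<otimes>\<^bsub>G\<^esub> h)))"

definition trivial_schur_multiplier :: "('a, 'b) monoid_scheme \<Rightarrow> bool" where
  "trivial_schur_multiplier G \<longleftrightarrow> (\<forall>\<alpha>. cocycle G \<alpha> \<longrightarrow> coboundary G \<alpha>)"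

definition alpha_rep ::
  "('a, 'b) monoid_scheme \<Rightarrow> ('a \<Rightarrow> 'a \<Rightarrow> complex) \<Rightarrow> nat \<Rightarrow> ('a \<Rightarrow> complex mat) \<Rightarrow> bool" where
  "alpha_rep G \<alpha> n \<rho> \<longleftrightarrow>
     cocycle G \<alpha> \<and>
     (\<forall>g \<in> carrier G. \<rho> g \<in> carrier_mat n n \<and> invertible_mat (\<rho> g)) \<and>
     \<rho> \<one>\<^bsub>G\<^esub> = 1\<^sub>m n \<and>
     (\<forall>g \<in> carrier G. \<forall>h \<in> carrier G. \<rho> g * \<rho> h = \<alpha> g h \<cdot>\<^sub>m \<rho> (g \<otimes>\<^bsub>G\<^esub> h))"

definition proj_rep :: "('a, 'b) monoid_scheme \<Rightarrow> nat \<Rightarrow> ('a \<Rightarrow> complex mat) \<Rightarrow> bool" where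
  "proj_rep G n \<rho> \<longleftrightarrow> n \<ge> 1 \<and> (\<exists>\<alpha>. alpha_rep G \<alpha> n \<rho>)"

definition faithful_proj :: "('a, 'b) monoid_scheme \<Rightarrow> nat \<Rightarrow> ('a \<Rightarrow> complex mat) \<Rightarrow> bool" where
  "faithful_proj G n \<rho> \<longleftrightarrow>
     (\<forall>g \<in> carrier G. (\<exists>c. \<rho> g = c \<cdot>\<^sub>m 1\<^sub>m n) \<longrightarrow> g = \<one>\<^bsub>G\<^esub>)"

definition invariant_subspace :: "('a, 'b) monoid_scheme \<Rightarrow> nat \<Rightarrow> ('a \<Rightarrow> complex mat) \<Rightarrow> complex vec set \<Rightarrow> bool" where
  "invariant_subspace G n \<rho> W \<longleftrightarrow>
     W \<subseteq> carrier_vec n \<and> 0\<^sub>v n \<in> W \<and>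
     (\<forall>v \<in> W. \<forall>w \<in> W. v + w \<in> W) \<and>
     (\<forall>c. \<forall>v \<in> W. c \<cdot>\<^sub>v v \<in> W) \<and>
     (\<forall>g \<in> carrier G. \<forall>v \<in> W. \<rho> g *\<^sub>v v \<in> W)"

definition irreducible_rep :: "('a, 'b) monoid_scheme \<Rightarrow> nat \<Rightarrow> ('a \<Rightarrow> complex mat) \<Rightarrow> bool" where
  "irreducible_rep G n \<rho> \<longleftrightarrow> n \<ge> 1 \<and>
     (\<forall>W. invariant_subspace G n \<rho> W \<longrightarrow> W = {0\<^sub>v n} \<or> W = carrier_vec n)"

definition ord_rep :: "('a, 'b) monoid_scheme \<Rightarrow> nat \<Rightarrow> ('a \<Rightarrow> complex mat) \<Rightarrow> bool" where
  "ord_rep G n \<rho> \<longleftrightarrow> n \<ge> 1 \<and>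
     (\<forall>g \<in> carrier G. \<rho> g \<in> carrier_mat n n) \<and>
     \<rho> \<one>\<^bsub>G\<^esub> = 1\<^sub>m n \<and>
     (\<forall>g \<in> carrier G. \<forall>h \<in> carrier G. \<rho> (g \<otimes>\<^bsub>G\<^esub> h) = \<rho> g * \<rho> h)"

definition faithful_ord :: "('a, 'b) monoid_scheme \<Rightarrow> nat \<Rightarrow> ('a \<Rightarrow> complex mat) \<Rightarrow> bool" where
  "faithful_ord G n \<rho> \<longleftrightarrow> (\<forall>g \<in> carrier G. \<rho> g = 1\<^sub>m n \<longrightarrow> g = \<one>\<^bsub>G\<^esub>)"

definition tau :: "('a, 'b) monoid_scheme \<Rightarrow> nat" where
  "tau G = (LEAST n. \<exists>\<rho>. proj_rep G n \<rho> \<and> faithful_proj G n \<rho>)"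

definition delta :: "('a, 'b) monoid_scheme \<Rightarrow> nat" where
  "delta G = (LEAST n. \<exists>\<rho>. ord_rep G n \<rho> \<and> faithful_ord G n \<rho>)"

end

theory Submission
  imports Defs "Jordan_Normal_Form.Jordan_Normal_Form_Existence" "Jordan_Normal_Form.Spectral_Radius"
    "HOL-Algebra.Group_Action" "HOL-Algebra.Multiplicative_Group" "HOL-Computational_Algebra.Primes"
begin

lemma center_sub: "grp_center G \<subseteq> carrier G" unfolding grp_center_def by auto

lemma conj_count:
  fixes G (structure)
  assumes grp: "group G" and fin: "finite (carrier G)" and pr: "prime p"
    and ord: "order G = p ^ k"
  shows "K \<subseteq> carrier G \<Longrightarrow> (\<forall>g\<in>carrier G. \<forall>x\<in>K. g \<otimes> x \<otimes> inv g \<in> K)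
     \<Longrightarrow> card K mod p = card (K \<inter> grp_center G) mod p"
proof (induction "card K" arbitrary: K rule: less_induct)
  case (less K)
  interpret group G by fact
  have finK: "finite K" using less.prems(1) fin finite_subset by blast
  show ?case
  proof (cases "K \<subseteq> grp_center G")
    case True
    then show ?thesis by (simp add: Int_absorb2)
  next
    case False
    then obtain x where xK: "x \<in> K" and xZ: "x \<notin> grp_center G" by blast
    have xG: "x \<in> carrier G" using xK less.prems(1) by blast
    define Orb where "Orb = {g \<otimes> x \<otimes> inv g | g. g \<in> carrier G}"
    have OrbK: "Orb \<subseteq> K" using less.prems(2) xK unfolding Orb_def by blast
    interpret A: group_action G "carrier G" "\<lambda>g. (\<lambda>h \<in> carrier G. g \<otimes> h \<otimes> (inv g))"
      by (rule action_by_conjugation)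
    have orbOrb: "orbit G (\<lambda>g. (\<lambda>h \<in> carrier G. g \<otimes> h \<otimes> (inv g))) x = Orb"
      unfolding orbit_def Orb_def using xG by auto
    have "card Orb dvd order G"
      using A.orbit_stabilizer_theorem[OF xG] unfolding orbOrb by (metis dvd_triv_left)
    then obtain j where j: "card Orb = p ^ j" using ord pr divides_primepow_nat by auto
    have xOrb: "x \<in> Orb" unfolding Orb_def using xG
      by (metis (mono_tags, lifting) inv_one mem_Collect_eq one_closed r_one l_one)
    from xZ xG obtain g where gG: "g \<in> carrier G" and gx: "x \<otimes> g \<noteq> g \<otimes> x"
      unfolding grp_center_def by auto
    have "g \<otimes> x \<otimes> inv g \<noteq> x"
    proof
      assume "g \<otimes> x \<otimes> inv g = x"
      then have "g \<otimes> x \<otimes> inv g \<otimes> g = x \<otimes> g" by simp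
      then have "g \<otimes> x = x \<otimes> g" using gG xG by (simp add: m_assoc)
      then show False using gx by simp
    qed
    moreover have "g \<otimes> x \<otimes> inv g \<in> Orb" unfolding Orb_def using gG by blast
    ultimately have "card Orb \<noteq> 1" using xOrb
      by (metis card_1_singletonE singletonD)
    then have "j \<noteq> 0" using j by auto
    then have pOrb: "p dvd card Orb" using j by simp
    define K' where "K' = K - Orb"
    have cardK: "card K = card K' + card Orb"
      unfolding K'_def using OrbK finK by (metis card_Diff_subset finite_subset card_mono le_add_diff_inverse2)
    have "card Orb > 0" using xOrb finK OrbK card_gt_0_iff finite_subset by blast
    then have lt: "card K' < card K" using cardK by simp
    have K'sub: "K' \<subseteq> carrier G" using less.prems(1) K'_def by blast
    have K'cl: "\<forall>g\<in>carrier G. \<forall>y\<in>K'. g \<otimes> y \<otimes> inv g \<in> K'"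
    proof (intro ballI)
      fix h y assume hG: "h \<in> carrier G" and yK': "y \<in> K'"
      have yG: "y \<in> carrier G" using yK' K'sub by blast
      have "h \<otimes> y \<otimes> inv h \<notin> Orb"
      proof
        assume "h \<otimes> y \<otimes> inv h \<in> Orb"
        then obtain f where fG: "f \<in> carrier G" and eq: "h \<otimes> y \<otimes> inv h = f \<otimes> x \<otimes> inv f"
          unfolding Orb_def by blast
        have "y = inv h \<otimes> (h \<otimes> y \<otimes> inv h) \<otimes> h" using hG yG by (simp add: m_assoc flip: m_assoc[of "inv h" h y])
        also have "\<dots> = (inv h \<otimes> f) \<otimes> x \<otimes> inv (inv h \<otimes> f)"
          using eq hG fG xG by (simp add: m_assoc inv_mult_group)
        finally have "y \<in> Orb" unfolding Orb_def using hG fG by blast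
        then show False using yK' K'_def by blast
      qed
      then show "h \<otimes> y \<otimes> inv h \<in> K'" using less.prems(2) hG yK' K'_def by blast
    qed
    have IH: "card K' mod p = card (K' \<inter> grp_center G) mod p"
      using less.hyps[OF lt K'sub K'cl] .
    have OrbZ: "Orb \<inter> grp_center G = {}"
    proof (rule ccontr)
      assume "Orb \<inter> grp_center G \<noteq> {}"
      then obtain f where fG: "f \<in> carrier G" and wZ: "f \<otimes> x \<otimes> inv f \<in> grp_center G"
        unfolding Orb_def by blast
      have "f \<otimes> x \<otimes> inv f \<otimes> f = f \<otimes> (f \<otimes> x \<otimes> inv f)"
        using wZ fG unfolding grp_center_def by blast
      then have "f \<otimes> x = f \<otimes> (f \<otimes> x \<otimes> inv f)" using fG xG by (simp add: m_assoc)
      then have "x = f \<otimes> x \<otimes> inv f" using fG xG by (metis Units_eq Units_l_cancel m_closed inv_closed)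
      then show False using wZ xZ by simp
    qed
    have "K \<inter> grp_center G = K' \<inter> grp_center G" using OrbZ K'_def by blast
    then show ?thesis using cardK IH pOrb by (metis mod_add_right_eq add.right_neutral dvd_imp_mod_0)
  qed
qed

lemma center_one: assumes "group G" shows "\<one>\<^bsub>G\<^esub> \<in> grp_center G"
proof -
  interpret group G by fact
  show ?thesis unfolding grp_center_def by simp
qed

lemma kernel_trivial:
  fixes G (structure)
  assumes pg: "p_group G p" and cZ: "card (grp_center G) = p"
    and sub: "subgroup K G"
    and cl: "\<forall>g\<in>carrier G. \<forall>x\<in>K. g \<otimes> x \<otimes> inv g \<in> K"
    and zZ: "z \<in> grp_center G" and zK: "z \<notin> K"
  shows "K = {\<one>}"
proof -
  from pg have grp: "group G" and fin: "finite (carrier G)" and pr: "prime p"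
    and ex: "\<exists>k. card (carrier G) = p ^ k" unfolding p_group_def by auto
  interpret group G by fact
  obtain k where ord: "order G = p ^ k" using ex unfolding order_def by auto
  have Ksub: "K \<subseteq> carrier G" using sub subgroup.subset by blast
  have one: "\<one> \<in> K" using sub subgroup.one_closed by blast
  have "card (rcosets K) * card K = order G" using lagrange[OF sub] .
  then have "card K dvd p ^ k" using ord by (metis dvd_triv_right)
  then obtain j where j: "card K = p ^ j" using pr divides_primepow_nat by auto
  have cc: "card K mod p = card (K \<inter> grp_center G) mod p"
    using conj_count[OF grp fin pr ord Ksub cl] .
  show ?thesis
  proof (rule ccontr)
    assume ne: "K \<noteq> {\<one>}"
    have finK: "finite K" using Ksub fin finite_subset by blast
    have "card K \<noteq> 1" using ne one card_1_singletonE by (metis singletonD)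
    then have "j \<noteq> 0" using j by auto
    then have "p dvd card K" using j by simp
    then have "card K mod p = 0" by simp
    then have "card (K \<inter> grp_center G) mod p = 0" using cc by linarith
    then have pd: "p dvd card (K \<inter> grp_center G)" by (rule mod_0_imp_dvd)
    have finZ: "finite (grp_center G)" by (rule finite_subset[OF center_sub fin])
    have oneKZ: "\<one> \<in> K \<inter> grp_center G" by (rule IntI[OF one center_one[OF grp]])
    have fin2: "finite (K \<inter> grp_center G)" using finZ by (rule finite_Int[OF disjI2])
    have c0: "card (K \<inter> grp_center G) > 0" by (rule card_gt_0_iff[THEN iffD2], intro conjI fin2, use oneKZ in blast)
    have cp: "card (K \<inter> grp_center G) \<ge> p" by (rule dvd_imp_le[OF pd c0])
    have "K \<inter> grp_center G = grp_center G"
      by (rule card_seteq[OF finZ Int_lower2], use cp cZ in linarith)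
    then show False using zZ zK by blast
  qed
qed

lemma jb_dims[simp]: "dim_row (jordan_block m a) = m" "dim_col (jordan_block m a) = m"
  unfolding jordan_block_def by auto

lemma jordan_pow_one_diag:
  fixes n_as :: "(nat \<times> complex) list"
  assumes "jordan_matrix n_as ^\<^sub>m N = 1\<^sub>m (sum_list (map fst n_as))" and N: "N \<ge> 1"
  shows "\<forall>i j. i < sum_list (map fst n_as) \<longrightarrow> j < sum_list (map fst n_as) \<longrightarrow> i \<noteq> j
           \<longrightarrow> jordan_matrix n_as $$ (i,j) = 0"
  using assms(1)
proof (induction n_as)
  case Nil
  then show ?case by simp
next
  case (Cons na rest)
  obtain m a where na: "na = (m,a)" by force
  define s where "s = sum_list (map fst rest)"
  have JC: "jordan_matrix ((m,a)#rest) = four_block_mat (jordan_block m a) (0\<^sub>m m s) (0\<^sub>m s m) (jordan_matrix rest)"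
    unfolding s_def by (rule jordan_matrix_Cons)
  have dimR: "dim_row (jordan_matrix rest ^\<^sub>m N) = s" "dim_col (jordan_matrix rest ^\<^sub>m N) = s"
    unfolding s_def by auto
  have pow: "jordan_matrix ((m,a)#rest) ^\<^sub>m N = four_block_mat (jordan_block m a ^\<^sub>m N) (0\<^sub>m m s) (0\<^sub>m s m) (jordan_matrix rest ^\<^sub>m N)"
    unfolding jordan_matrix_pow[of "(m,a)#rest"] jordan_matrix_pow[of rest]
    using dimR unfolding jordan_matrix_pow[of rest] by (simp add: Let_def)
  have tot: "sum_list (map fst ((m,a)#rest)) = m + s" unfolding s_def by simp
  have E: "four_block_mat (jordan_block m a ^\<^sub>m N) (0\<^sub>m m s) (0\<^sub>m s m) (jordan_matrix rest ^\<^sub>m N) = 1\<^sub>m (m + s)"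
    using Cons.prems unfolding na pow tot .
  have entry: "four_block_mat (jordan_block m a ^\<^sub>m N) (0\<^sub>m m s) (0\<^sub>m s m) (jordan_matrix rest ^\<^sub>m N) $$ (i,j)
     = (if i = j then 1 else 0)" if "i < m + s" "j < m + s" for i j
    using E that by simp
  have dJ: "dim_row (jordan_block m a ^\<^sub>m N) = m" "dim_col (jordan_block m a ^\<^sub>m N) = m"
    by (rule jordan_block_pow_dim)+
  have dimJ: "dim_row (jordan_matrix rest) = s" "dim_col (jordan_matrix rest) = s" unfolding s_def by auto
  have restI: "jordan_matrix rest ^\<^sub>m N = 1\<^sub>m s"
  proof (rule eq_matI)
    fix i j assume ij: "i < dim_row (1\<^sub>m s)" "j < dim_col (1\<^sub>m s)"
    have "four_block_mat (jordan_block m a ^\<^sub>m N) (0\<^sub>m m s) (0\<^sub>m s m) (jordan_matrix rest ^\<^sub>m N) $$ (m+i,m+j)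
        = (if m+i = m+j then 1 else 0)" using entry[of "m+i" "m+j"] ij by simp
    moreover have "four_block_mat (jordan_block m a ^\<^sub>m N) (0\<^sub>m m s) (0\<^sub>m s m) (jordan_matrix rest ^\<^sub>m N) $$ (m+i,m+j)
        = (jordan_matrix rest ^\<^sub>m N) $$ (i,j)"
      by (subst index_mat_four_block(1), simp_all only: dJ dimR, insert ij, auto)
    ultimately show "(jordan_matrix rest ^\<^sub>m N) $$ (i,j) = 1\<^sub>m s $$ (i,j)" using ij by simp
  qed (use dimR in auto)
  have blk: "(jordan_block m a ^\<^sub>m N) $$ (i,j) = (if i = j then 1 else 0)" if ij: "i < m" "j < m" for i j
  proof -
    have "four_block_mat (jordan_block m a ^\<^sub>m N) (0\<^sub>m m s) (0\<^sub>m s m) (jordan_matrix rest ^\<^sub>m N) $$ (i,j)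
        = (jordan_block m a ^\<^sub>m N) $$ (i,j)"
      by (subst index_mat_four_block(1), simp_all only: dJ dimR, insert ij, auto)
    then show ?thesis using entry[of i j] ij by simp
  qed
  have IH: "\<forall>i j. i < s \<longrightarrow> j < s \<longrightarrow> i \<noteq> j \<longrightarrow> jordan_matrix rest $$ (i,j) = 0"
    using Cons.IH restI unfolding s_def by blast
  have m1: "m \<le> 1"
  proof (rule ccontr)
    assume "\<not> m \<le> 1"
    then have m2: "m \<ge> 2" by simp
    have e00: "(jordan_block m a ^\<^sub>m N) $$ (0,0) = 1" using blk[of 0 0] m2 by simp
    have e01: "(jordan_block m a ^\<^sub>m N) $$ (0,1) = 0" using blk[of 0 1] m2 by simp
    have aN: "a ^ N = 1" using e00 m2 unfolding jordan_block_pow by simp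
    then have a0: "a \<noteq> 0" using N by (metis power_0_left zero_neq_one not_one_le_zero)
    have "of_nat N * a ^ (N - 1) = 0" using e01 m2 unfolding jordan_block_pow by simp
    then show False using a0 N by simp
  qed
  show ?case
  proof (intro allI impI)
    fix i j assume i: "i < sum_list (map fst (na # rest))" and j: "j < sum_list (map fst (na # rest))" and ij: "i \<noteq> j"
    have i': "i < m + s" and j': "j < m + s" using i j tot na by auto
    show "jordan_matrix (na # rest) $$ (i,j) = 0"
      unfolding na JC
    proof (subst index_mat_four_block(1), simp_all only: jb_dims dimJ)
      show "i < m + s" "j < m + s" by fact+
      show "(if i < m then if j < m then jordan_block m a $$ (i, j) else 0\<^sub>m m s $$ (i, j - m)
          else if j < m then 0\<^sub>m s m $$ (i - m, j) else jordan_matrix rest $$ (i - m, j - m)) = 0"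
        using i' j' ij m1 IH by auto
    qed
  qed
qed

lemma smult_smult_mat: "(a::'a::comm_ring_1) \<cdot>\<^sub>m (b \<cdot>\<^sub>m A) = (a * b) \<cdot>\<^sub>m A"
  by (rule eq_matI) auto

lemma one_smult_mat': "(1::'a::comm_ring_1) \<cdot>\<^sub>m A = A"
  by (rule eq_matI) auto

lemma smult_mat_vec: assumes "A \<in> carrier_mat n m" "v \<in> carrier_vec m"
  shows "(k \<cdot>\<^sub>m A) *\<^sub>v v = (k::'a::comm_ring_1) \<cdot>\<^sub>v (A *\<^sub>v v)"
proof (rule eq_vecI)
  fix i assume "i < dim_vec (k \<cdot>\<^sub>v (A *\<^sub>v v))"
  then have i: "i < n" using assms by simp
  have "row (k \<cdot>\<^sub>m A) i = k \<cdot>\<^sub>v row A i" using i assms by (intro eq_vecI) auto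
  then show "((k \<cdot>\<^sub>m A) *\<^sub>v v) $ i = (k \<cdot>\<^sub>v (A *\<^sub>v v)) $ i"
    using i assms by simp
qed (use assms in simp)

lemma mat_vec_unit: assumes "(A::complex mat) \<in> carrier_mat n n" "i < n" "j < n"
  shows "(A *\<^sub>v unit_vec n j) $ i = A $$ (i,j)"
proof -
  have "row A i \<bullet> unit_vec n j = row A i $ j" using assms(3) by (rule scalar_prod_right_unit)
  then show ?thesis using assms by simp
qed

lemma rescale:
  fixes G (structure) and \<rho> :: "'a \<Rightarrow> complex mat"
  assumes grp: "group G" and pr: "proj_rep G n \<rho>" and ts: "trivial_schur_multiplier G"
  obtains \<beta> \<sigma> where "\<forall>g\<in>carrier G. \<beta> g \<noteq> 0" "\<forall>g\<in>carrier G. \<sigma> g \<in> carrier_mat n n"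
   "\<sigma> \<one> = 1\<^sub>m n" "\<forall>g\<in>carrier G. \<forall>h\<in>carrier G. \<sigma> (g \<otimes> h) = \<sigma> g * \<sigma> h"
   "\<forall>g\<in>carrier G. \<rho> g = \<beta> g \<cdot>\<^sub>m \<sigma> g"
proof -
  from pr obtain \<alpha> where n1: "n \<ge> 1" and ar: "alpha_rep G \<alpha> n \<rho>" unfolding proj_rep_def by auto
  from ar have coc: "cocycle G \<alpha>" and rc: "\<forall>g\<in>carrier G. \<rho> g \<in> carrier_mat n n"
    and r1: "\<rho> \<one> = 1\<^sub>m n"
    and rm: "\<forall>g\<in>carrier G. \<forall>h\<in>carrier G. \<rho> g * \<rho> h = \<alpha> g h \<cdot>\<^sub>m \<rho> (g \<otimes> h)"
    unfolding alpha_rep_def by auto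
  from ts coc obtain \<beta> where b0: "\<forall>g\<in>carrier G. \<beta> g \<noteq> 0"
    and ab: "\<forall>g\<in>carrier G. \<forall>h\<in>carrier G. \<alpha> g h = \<beta> g * \<beta> h / \<beta> (g \<otimes> h)"
    unfolding trivial_schur_multiplier_def coboundary_def by blast
  interpret group G by fact
  have "\<rho> \<one> * \<rho> \<one> = \<alpha> \<one> \<one> \<cdot>\<^sub>m \<rho> (\<one> \<otimes> \<one>)" using rm by simp
  then have "1\<^sub>m n = \<alpha> \<one> \<one> \<cdot>\<^sub>m 1\<^sub>m n" using r1 by simp
  then have "(1\<^sub>m n :: complex mat) $$ (0,0) = (\<alpha> \<one> \<one> \<cdot>\<^sub>m 1\<^sub>m n) $$ (0,0)" by simp
  then have a11: "\<alpha> \<one> \<one> = 1" using n1 by simp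
  have b1: "\<beta> \<one> = 1" using a11 ab b0 by (simp add: field_simps)
  define \<sigma> where "\<sigma> g = (1 / \<beta> g) \<cdot>\<^sub>m \<rho> g" for g
  show ?thesis
  proof
    show "\<forall>g\<in>carrier G. \<beta> g \<noteq> 0" by fact
    show "\<forall>g\<in>carrier G. \<sigma> g \<in> carrier_mat n n" using rc unfolding \<sigma>_def by auto
    show "\<sigma> \<one> = 1\<^sub>m n" unfolding \<sigma>_def b1 r1 by (simp add: one_smult_mat')
    show "\<forall>g\<in>carrier G. \<rho> g = \<beta> g \<cdot>\<^sub>m \<sigma> g"
      using b0 unfolding \<sigma>_def by (simp add: smult_smult_mat one_smult_mat')
    show "\<forall>g\<in>carrier G. \<forall>h\<in>carrier G. \<sigma> (g \<otimes> h) = \<sigma> g * \<sigma> h"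
    proof (intro ballI)
      fix g h assume g: "g \<in> carrier G" and h: "h \<in> carrier G"
      have gh: "g \<otimes> h \<in> carrier G" using g h by simp
      have "\<sigma> g * \<sigma> h = (1 / \<beta> g * (1 / \<beta> h)) \<cdot>\<^sub>m (\<rho> g * \<rho> h)"
        unfolding \<sigma>_def using rc g h
        by (simp add: mult_smult_assoc_mat[of _ n n _ n] mult_smult_distrib[of _ n n _ n] smult_smult_mat mult_ac)
      also have "\<dots> = (1 / \<beta> g * (1 / \<beta> h) * \<alpha> g h) \<cdot>\<^sub>m \<rho> (g \<otimes> h)"
        using rm g h by (simp add: smult_smult_mat)
      also have "1 / \<beta> g * (1 / \<beta> h) * \<alpha> g h = 1 / \<beta> (g \<otimes> h)"
        using ab b0 g h gh by (simp add: field_simps)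
      finally show "\<sigma> (g \<otimes> h) = \<sigma> g * \<sigma> h" unfolding \<sigma>_def by simp
    qed
  qed
qed

lemma schur_center:
  fixes G (structure) and \<sigma> \<rho> :: "'a \<Rightarrow> complex mat"
  assumes grp: "group G" and n1: "n \<ge> 1"
    and sc: "\<forall>g\<in>carrier G. \<sigma> g \<in> carrier_mat n n"
    and sm: "\<forall>g\<in>carrier G. \<forall>h\<in>carrier G. \<sigma> (g \<otimes> h) = \<sigma> g * \<sigma> h"
    and zZ: "z \<in> grp_center G"
    and irr: "\<forall>W. invariant_subspace G n \<rho> W \<longrightarrow> W = {0\<^sub>v n} \<or> W = carrier_vec n"
    and rs: "\<forall>g\<in>carrier G. \<rho> g = \<beta> g \<cdot>\<^sub>m \<sigma> g"
  shows "\<exists>c. \<sigma> z = c \<cdot>\<^sub>m 1\<^sub>m n"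
proof -
  interpret group G by fact
  have zG: "z \<in> carrier G" using zZ unfolding grp_center_def by auto
  have zc: "\<forall>g\<in>carrier G. z \<otimes> g = g \<otimes> z" using zZ unfolding grp_center_def by auto
  define A where "A = \<sigma> z"
  have A: "A \<in> carrier_mat n n" using sc zG unfolding A_def by auto
  from spectrum_non_empty[OF A] n1 obtain lam where "lam \<in> spectrum A" by fastforce
  then obtain v where ev: "eigenvector A v lam" unfolding spectrum_def eigenvalue_def by auto
  then have vc: "v \<in> carrier_vec n" and v0: "v \<noteq> 0\<^sub>v n" and Av: "A *\<^sub>v v = lam \<cdot>\<^sub>v v"
    unfolding eigenvector_def using A by auto
  define W where "W = {w \<in> carrier_vec n. A *\<^sub>v w = lam \<cdot>\<^sub>v w}"
  have smW: "c \<cdot>\<^sub>v w \<in> W" if "w \<in> W" for c w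
  proof -
    have w: "w \<in> carrier_vec n" "A *\<^sub>v w = lam \<cdot>\<^sub>v w" using that unfolding W_def by auto
    have "A *\<^sub>v (c \<cdot>\<^sub>v w) = c \<cdot>\<^sub>v (A *\<^sub>v w)" by (rule mult_mat_vec[OF A w(1)])
    also have "\<dots> = lam \<cdot>\<^sub>v (c \<cdot>\<^sub>v w)" unfolding w(2) smult_smult_assoc by (simp add: mult.commute)
    finally show ?thesis using w unfolding W_def by auto
  qed
  have inv: "invariant_subspace G n \<rho> W"
    unfolding invariant_subspace_def
  proof (intro conjI ballI allI)
    show "W \<subseteq> carrier_vec n" unfolding W_def by auto
    show "0\<^sub>v n \<in> W" unfolding W_def using A by (auto intro: eq_vecI)
    show "v1 + w1 \<in> W" if "v1 \<in> W" "w1 \<in> W" for v1 w1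
    proof -
      have a: "v1 \<in> carrier_vec n" "A *\<^sub>v v1 = lam \<cdot>\<^sub>v v1" "w1 \<in> carrier_vec n" "A *\<^sub>v w1 = lam \<cdot>\<^sub>v w1"
        using that unfolding W_def by auto
      have "A *\<^sub>v (v1 + w1) = A *\<^sub>v v1 + A *\<^sub>v w1" by (rule mult_add_distrib_mat_vec[OF A a(1) a(3)])
      also have "\<dots> = lam \<cdot>\<^sub>v (v1 + w1)" unfolding a(2) a(4) by (rule smult_add_distrib_vec[symmetric, OF a(1) a(3)])
      finally show ?thesis using a unfolding W_def by auto
    qed
    show "c \<cdot>\<^sub>v v1 \<in> W" if "v1 \<in> W" for c v1 using smW that .
    show "\<rho> g *\<^sub>v w \<in> W" if g: "g \<in> carrier G" and w: "w \<in> W" for g w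
    proof -
      have wc: "w \<in> carrier_vec n" and Aw: "A *\<^sub>v w = lam \<cdot>\<^sub>v w" using w unfolding W_def by auto
      have sg: "\<sigma> g \<in> carrier_mat n n" using sc g by auto
      have comm: "A * \<sigma> g = \<sigma> g * A" unfolding A_def using sm zc g zG by metis
      have "A *\<^sub>v (\<sigma> g *\<^sub>v w) = (A * \<sigma> g) *\<^sub>v w" using A sg wc by simp
      also have "\<dots> = (\<sigma> g * A) *\<^sub>v w" by (simp only: comm)
      also have "\<dots> = \<sigma> g *\<^sub>v (lam \<cdot>\<^sub>v w)" using A sg wc Aw by simp
      also have "\<dots> = lam \<cdot>\<^sub>v (\<sigma> g *\<^sub>v w)" by (rule mult_mat_vec[OF sg wc])
      finally have "\<sigma> g *\<^sub>v w \<in> W" unfolding W_def using sg wc by auto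
      then have "\<beta> g \<cdot>\<^sub>v (\<sigma> g *\<^sub>v w) \<in> W" by (rule smW)
      moreover have "\<rho> g *\<^sub>v w = \<beta> g \<cdot>\<^sub>v (\<sigma> g *\<^sub>v w)" using rs g smult_mat_vec[OF sg wc] by simp
      ultimately show ?thesis by simp
    qed
  qed
  have "v \<in> W" using vc Av unfolding W_def by auto
  then have "W \<noteq> {0\<^sub>v n}" using v0 by auto
  then have Wall: "W = carrier_vec n" using irr inv by blast
  have "A = lam \<cdot>\<^sub>m 1\<^sub>m n"
  proof (rule eq_matI)
    fix i j assume ij: "i < dim_row (lam \<cdot>\<^sub>m 1\<^sub>m n)" "j < dim_col (lam \<cdot>\<^sub>m 1\<^sub>m n)"
    then have i: "i < n" and j: "j < n" by auto
    have "unit_vec n j \<in> W" using Wall by simp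
    then have "A *\<^sub>v unit_vec n j = lam \<cdot>\<^sub>v unit_vec n j" unfolding W_def by auto
    then have "(A *\<^sub>v unit_vec n j) $ i = (lam \<cdot>\<^sub>v unit_vec n j) $ i" by simp
    then show "A $$ (i,j) = (lam \<cdot>\<^sub>m 1\<^sub>m n) $$ (i,j)" using mat_vec_unit[OF A i j] i j by simp
  qed (use A in auto)
  then show ?thesis unfolding A_def by blast
qed


lemma regular_rep:
  fixes G (structure)
  assumes grp: "group G" and fin: "finite (carrier G)"
  shows "\<exists>m \<rho>. ord_rep G m \<rho> \<and> faithful_ord G m \<rho>"
proof -
  interpret group G by fact
  define m where "m = card (carrier G)"
  obtain e where e: "bij_betw e {0..<m} (carrier G)"
    using ex_bij_betw_nat_finite[OF fin] unfolding m_def by blast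
  have m1: "m \<ge> 1" unfolding m_def using fin one_closed
    by (metis One_nat_def Suc_leI card_gt_0_iff empty_iff)
  have eG: "e l \<in> carrier G" if "l < m" for l using e that bij_betwE by fastforce
  have einj: "e i = e j \<longleftrightarrow> i = j" if "i < m" "j < m" for i j
    using e that unfolding bij_betw_def inj_on_def by auto
  have esurj: "\<exists>l<m. e l = x" if "x \<in> carrier G" for x
    using e that unfolding bij_betw_def by (metis atLeastLessThan_iff imageE)
  define R where "R g = mat m m (\<lambda>(i,j). if e i = g \<otimes> e j then (1::complex) else 0)" for g
  have Rc: "R g \<in> carrier_mat m m" for g unfolding R_def by simp
  have R1: "R \<one> = 1\<^sub>m m"
    by (rule eq_matI) (auto simp: R_def eG einj)
  have Rm: "R (g \<otimes> h) = R g * R h" if g: "g \<in> carrier G" and h: "h \<in> carrier G" for g h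
  proof (rule eq_matI)
    fix i j assume "i < dim_row (R g * R h)" "j < dim_col (R g * R h)"
    then have i: "i < m" and j: "j < m" by (auto simp: R_def)
    obtain l0 where l0: "l0 < m" "e l0 = h \<otimes> e j" using esurj[of "h \<otimes> e j"] h eG[OF j] by auto
    have "(R g * R h) $$ (i,j) = (\<Sum>l = 0..<m. (if e i = g \<otimes> e l then 1 else 0) * (if e l = h \<otimes> e j then 1 else 0))"
      using i j by (simp add: R_def scalar_prod_def)
    also have "\<dots> = (\<Sum>l = 0..<m. if l = l0 then (if e i = g \<otimes> e l0 then 1 else 0) else 0)"
    proof (rule sum.cong[OF refl])
      fix l assume "l \<in> {0..<m}"
      then have lm: "l < m" by simp
      have "e l = h \<otimes> e j \<longleftrightarrow> l = l0" using l0 einj[OF lm l0(1)] by auto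
      then show "(if e i = g \<otimes> e l then 1 else 0) * (if e l = h \<otimes> e j then 1 else 0)
          = (if l = l0 then (if e i = g \<otimes> e l0 then 1 else 0) else (0::complex))" by auto
    qed
    also have "\<dots> = (if e i = g \<otimes> (h \<otimes> e j) then 1 else 0)" using l0 by simp
    also have "\<dots> = R (g \<otimes> h) $$ (i,j)" using i j g h eG[OF j] by (simp add: R_def m_assoc)
    finally show "R (g \<otimes> h) $$ (i,j) = (R g * R h) $$ (i,j)" by simp
  qed (auto simp: R_def)
  have ord: "ord_rep G m R" unfolding ord_rep_def using m1 Rc R1 Rm by auto
  have "faithful_ord G m R" unfolding faithful_ord_def
  proof (intro ballI impI)
    fix g assume g: "g \<in> carrier G" and "R g = 1\<^sub>m m"
    then have "R g $$ (0,0) = 1" using m1 by simp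
    then have "e 0 = g \<otimes> e 0" using m1 by (simp add: R_def split: if_splits)
    then show "g = \<one>" using g eG[of 0] m1 by (metis r_cancel_one One_nat_def less_eq_Suc_le)
  qed
  then show ?thesis using ord by blast
qed

lemma ext_rep:
  fixes G (structure) and \<rho> :: "'a \<Rightarrow> complex mat"
  assumes grp: "group G" and ordr: "ord_rep G n \<rho>" and fo: "faithful_ord G n \<rho>"
  shows "\<exists>\<rho>'. proj_rep G (n+1) \<rho>' \<and> faithful_proj G (n+1) \<rho>'"
proof -
  interpret group G by fact
  from ordr have n1: "n \<ge> 1" and rc: "\<forall>g\<in>carrier G. \<rho> g \<in> carrier_mat n n"
    and r1: "\<rho> \<one> = 1\<^sub>m n" and rm: "\<forall>g\<in>carrier G. \<forall>h\<in>carrier G. \<rho> (g \<otimes> h) = \<rho> g * \<rho> h"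
    unfolding ord_rep_def by auto
  define R where "R g = four_block_mat (\<rho> g) (0\<^sub>m n 1) (0\<^sub>m 1 n) (1\<^sub>m 1)" for g
  have Rc: "R g \<in> carrier_mat (n+1) (n+1)" if "g \<in> carrier G" for g
    unfolding R_def using four_block_carrier_mat[of "\<rho> g" n n "1\<^sub>m 1" 1 1] rc that by simp
  have R1: "R \<one> = 1\<^sub>m (n+1)" unfolding R_def r1 by simp
  have Rm: "R g * R h = R (g \<otimes> h)" if g: "g \<in> carrier G" and h: "h \<in> carrier G" for g h
  proof -
    have "R g * R h = four_block_mat (\<rho> g * \<rho> h + 0\<^sub>m n 1 * 0\<^sub>m 1 n) (\<rho> g * 0\<^sub>m n 1 + 0\<^sub>m n 1 * 1\<^sub>m 1)
        (0\<^sub>m 1 n * \<rho> h + 1\<^sub>m 1 * 0\<^sub>m 1 n) (0\<^sub>m 1 n * 0\<^sub>m n 1 + 1\<^sub>m 1 * 1\<^sub>m 1)"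
      unfolding R_def by (rule mult_four_block_mat[of _ n n _ 1 _ 1 _ _ n _ 1]) (use rc g h in auto)
    also have "\<dots> = R (g \<otimes> h)"
    proof -
      have rg: "\<rho> g \<in> carrier_mat n n" and rh: "\<rho> h \<in> carrier_mat n n" using rc g h by auto
      have gh: "\<rho> g * \<rho> h \<in> carrier_mat n n" using rg rh by simp
      have b1: "\<rho> g * \<rho> h + 0\<^sub>m n 1 * 0\<^sub>m 1 n = \<rho> (g \<otimes> h)"
        using gh rm g h by (intro eq_matI) auto
      have b2: "\<rho> g * 0\<^sub>m n 1 + 0\<^sub>m n 1 * 1\<^sub>m 1 = (0\<^sub>m n 1 :: complex mat)"
        using rg by (intro eq_matI) auto
      have b3: "0\<^sub>m 1 n * \<rho> h + 1\<^sub>m 1 * 0\<^sub>m 1 n = (0\<^sub>m 1 n :: complex mat)"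
        using rh by (intro eq_matI) auto
      have b4: "0\<^sub>m 1 n * 0\<^sub>m n 1 + 1\<^sub>m 1 * 1\<^sub>m 1 = (1\<^sub>m 1 :: complex mat)"
        by (intro eq_matI) auto
      show ?thesis unfolding R_def b1 b2 b3 b4 ..
    qed
    finally show ?thesis .
  qed
  have coc: "cocycle G (\<lambda>_ _. 1)" unfolding cocycle_def by simp
  have inv: "invertible_mat (R g)" if g: "g \<in> carrier G" for g
  proof -
    have "R g * R (inv g) = 1\<^sub>m (n+1)" using Rm[OF g inv_closed[OF g]] g R1 by simp
    moreover have "R (inv g) * R g = 1\<^sub>m (n+1)" using Rm[OF inv_closed[OF g] g] g R1 by simp
    ultimately show ?thesis unfolding invertible_mat_def inverts_mat_def square_mat.simps
      using Rc[OF g] Rc[OF inv_closed[OF g]] by auto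
  qed
  have ar: "alpha_rep G (\<lambda>_ _. 1) (n+1) R" unfolding alpha_rep_def
    using coc Rc inv R1 Rm by (auto simp: one_smult_mat')
  have fp: "faithful_proj G (n+1) R" unfolding faithful_proj_def
  proof (intro ballI impI)
    fix g assume g: "g \<in> carrier G" and "\<exists>c. R g = c \<cdot>\<^sub>m 1\<^sub>m (n+1)"
    then obtain c where c: "R g = c \<cdot>\<^sub>m 1\<^sub>m (n+1)" by blast
    have rg: "\<rho> g \<in> carrier_mat n n" using rc g by auto
    have "R g $$ (n,n) = 1" unfolding R_def using rg by simp
    then have c1: "c = 1" using c by simp
    have "\<rho> g = 1\<^sub>m n"
    proof (rule eq_matI)
      fix i j assume "i < dim_row (1\<^sub>m n :: complex mat)" "j < dim_col (1\<^sub>m n :: complex mat)"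
      then have i: "i < n" and j: "j < n" by auto
      have "R g $$ (i,j) = \<rho> g $$ (i,j)" unfolding R_def using rg i j by simp
      then show "\<rho> g $$ (i,j) = 1\<^sub>m n $$ (i,j)" using c c1 i j by simp
    qed (use rg in auto)
    then show "g = \<one>" using fo g unfolding faithful_ord_def by auto
  qed
  have "proj_rep G (n+1) R" unfolding proj_rep_def using ar by auto
  then show ?thesis using fp by blast
qed

lemma sub_rep:
  fixes G (structure) and \<tau> :: "'a \<Rightarrow> complex mat"
  assumes grp: "group G" and tc: "\<forall>g\<in>carrier G. \<tau> g \<in> carrier_mat n n"
    and t1: "\<tau> \<one> = 1\<^sub>m n"
    and tm: "\<forall>g\<in>carrier G. \<forall>h\<in>carrier G. \<tau> (g \<otimes> h) = \<tau> g * \<tau> h"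
    and S: "S \<subseteq> {..<n}" "S \<noteq> {}"
    and van: "\<forall>g\<in>carrier G. \<forall>i<n. \<forall>j\<in>S. i \<notin> S \<longrightarrow> \<tau> g $$ (i,j) = 0"
  shows "ord_rep G (card S) (\<lambda>g. mat (card S) (card S)
            (\<lambda>(a,b). \<tau> g $$ (sorted_list_of_set S ! a, sorted_list_of_set S ! b)))"
proof -
  interpret group G by fact
  define xs where "xs = sorted_list_of_set S"
  define k where "k = card S"
  define R where "R g = mat k k (\<lambda>(a,b). \<tau> g $$ (xs ! a, xs ! b))" for g
  have finS: "finite S" using S(1) finite_subset by blast
  have len: "length xs = k" unfolding xs_def k_def using finS by simp
  have dist: "distinct xs" unfolding xs_def by simp
  have setxs: "set xs = S" unfolding xs_def using finS by simp
  have bij: "bij_betw (nth xs) {0..<k} S"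
    using bij_betw_nth[OF dist, of "{..<k}" S] len setxs by (simp add: atLeast0LessThan)
  have mem: "xs ! a \<in> S" if "a < k" for a using that len setxs nth_mem by blast
  have lt: "xs ! a < n" if "a < k" for a using mem[OF that] S(1) by auto
  have inj: "xs ! a = xs ! b \<longleftrightarrow> a = b" if "a < k" "b < k" for a b
    using nth_eq_iff_index_eq[OF dist] that len by auto
  have k1: "k \<ge> 1" unfolding k_def using finS S(2) by (simp add: Suc_leI card_gt_0_iff)
  have R1: "R \<one> = 1\<^sub>m k"
    by (rule eq_matI) (auto simp: R_def t1 lt inj)
  have Rm: "R (g \<otimes> h) = R g * R h" if g: "g \<in> carrier G" and h: "h \<in> carrier G" for g h
  proof (rule eq_matI)
    fix a b assume "a < dim_row (R g * R h)" "b < dim_col (R g * R h)"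
    then have a: "a < k" and b: "b < k" by (auto simp: R_def)
    have tg: "\<tau> g \<in> carrier_mat n n" and th: "\<tau> h \<in> carrier_mat n n" using tc g h by auto
    have "(R g * R h) $$ (a,b) = (\<Sum>c = 0..<k. \<tau> g $$ (xs ! a, xs ! c) * \<tau> h $$ (xs ! c, xs ! b))"
      using a b by (simp add: R_def scalar_prod_def)
    also have "\<dots> = (\<Sum>l\<in>S. \<tau> g $$ (xs ! a, l) * \<tau> h $$ (l, xs ! b))"
      by (rule sum.reindex_bij_betw[OF bij, where g = "\<lambda>l. \<tau> g $$ (xs ! a, l) * \<tau> h $$ (l, xs ! b)"])
    also have "\<dots> = (\<Sum>l = 0..<n. \<tau> g $$ (xs ! a, l) * \<tau> h $$ (l, xs ! b))"
    proof (rule sum.mono_neutral_left)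
      show "finite {0..<n}" by simp
      show "S \<subseteq> {0..<n}" using S(1) by auto
      show "\<forall>i\<in>{0..<n} - S. \<tau> g $$ (xs ! a, i) * \<tau> h $$ (i, xs ! b) = 0"
        using van h mem[OF b] by auto
    qed
    also have "\<dots> = (\<tau> g * \<tau> h) $$ (xs ! a, xs ! b)"
      using tg th lt[OF a] lt[OF b] by (simp add: scalar_prod_def)
    also have "\<dots> = R (g \<otimes> h) $$ (a,b)" using tm g h a b by (simp add: R_def)
    finally show "R (g \<otimes> h) $$ (a,b) = (R g * R h) $$ (a,b)" by simp
  qed (auto simp: R_def)
  have "ord_rep G k R" unfolding ord_rep_def using k1 R1 Rm by (auto simp: R_def)
  then show ?thesis unfolding R_def k_def xs_def .
qed

lemma diag_right_mult:
  assumes B: "(B::complex mat) \<in> carrier_mat n n" and J: "J \<in> carrier_mat n n"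
    and dg: "\<forall>i<n. \<forall>j<n. i \<noteq> j \<longrightarrow> J $$ (i,j) = 0"
    and i: "i < n" and j: "j < n"
  shows "(B * J) $$ (i,j) = B $$ (i,j) * J $$ (j,j)" and "(J * B) $$ (i,j) = J $$ (i,i) * B $$ (i,j)"
proof -
  have "(B * J) $$ (i,j) = (\<Sum>l = 0..<n. B $$ (i,l) * J $$ (l,j))"
    using B J i j by (simp add: scalar_prod_def)
  also have "\<dots> = (\<Sum>l = 0..<n. if l = j then B $$ (i,j) * J $$ (j,j) else 0)"
    by (rule sum.cong[OF refl]) (use dg j in auto)
  also have "\<dots> = B $$ (i,j) * J $$ (j,j)" using j by simp
  finally show "(B * J) $$ (i,j) = B $$ (i,j) * J $$ (j,j)" .
  have "(J * B) $$ (i,j) = (\<Sum>l = 0..<n. J $$ (i,l) * B $$ (l,j))"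
    using B J i j by (simp add: scalar_prod_def)
  also have "\<dots> = (\<Sum>l = 0..<n. if l = i then J $$ (i,i) * B $$ (i,j) else 0)"
    by (rule sum.cong[OF refl]) (use dg i in auto)
  also have "\<dots> = J $$ (i,i) * B $$ (i,j)" using i by simp
  finally show "(J * B) $$ (i,j) = J $$ (i,i) * B $$ (i,j)" .
qed

lemma ker_props:
  fixes G (structure) and \<rho> :: "'a \<Rightarrow> complex mat"
  assumes grp: "group G" and ordr: "ord_rep G k \<rho>"
  shows "subgroup {g \<in> carrier G. \<rho> g = 1\<^sub>m k} G"
    and "\<forall>g\<in>carrier G. \<forall>x\<in>{g \<in> carrier G. \<rho> g = 1\<^sub>m k}. g \<otimes> x \<otimes> inv g \<in> {g \<in> carrier G. \<rho> g = 1\<^sub>m k}"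
proof -
  interpret group G by fact
  from ordr have rc: "\<forall>g\<in>carrier G. \<rho> g \<in> carrier_mat k k"
    and r1: "\<rho> \<one> = 1\<^sub>m k" and rm: "\<forall>g\<in>carrier G. \<forall>h\<in>carrier G. \<rho> (g \<otimes> h) = \<rho> g * \<rho> h"
    unfolding ord_rep_def by auto
  have rinv: "\<rho> (inv x) = 1\<^sub>m k" if x: "x \<in> carrier G" "\<rho> x = 1\<^sub>m k" for x
  proof -
    have ric: "\<rho> (inv x) \<in> carrier_mat k k" using rc x by simp
    have "\<rho> (inv x) * \<rho> x = \<rho> (inv x)" unfolding x(2) using right_mult_one_mat[OF ric] by simp
    then have "\<rho> (inv x) = \<rho> (inv x) * \<rho> x" by simp
    also have "\<dots> = \<rho> (inv x \<otimes> x)" by (rule rm[rule_format, OF inv_closed[OF x(1)] x(1), symmetric])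
    finally show ?thesis using x r1 by simp
  qed
  show "subgroup {g \<in> carrier G. \<rho> g = 1\<^sub>m k} G"
  proof (rule subgroup.intro)
    show "{g \<in> carrier G. \<rho> g = 1\<^sub>m k} \<subseteq> carrier G" by auto
    show "x \<otimes> y \<in> {g \<in> carrier G. \<rho> g = 1\<^sub>m k}" if "x \<in> {g \<in> carrier G. \<rho> g = 1\<^sub>m k}" "y \<in> {g \<in> carrier G. \<rho> g = 1\<^sub>m k}" for x y
      using that rm by simp
    show "\<one> \<in> {g \<in> carrier G. \<rho> g = 1\<^sub>m k}" using r1 by simp
    show "inv x \<in> {g \<in> carrier G. \<rho> g = 1\<^sub>m k}" if "x \<in> {g \<in> carrier G. \<rho> g = 1\<^sub>m k}" for x
      using that rinv by simp
  qed
  show "\<forall>g\<in>carrier G. \<forall>x\<in>{g \<in> carrier G. \<rho> g = 1\<^sub>m k}. g \<otimes> x \<otimes> inv g \<in> {g \<in> carrier G. \<rho> g = 1\<^sub>m k}"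
  proof (intro ballI)
    fix g x assume g: "g \<in> carrier G" and x: "x \<in> {g \<in> carrier G. \<rho> g = 1\<^sub>m k}"
    have xG: "x \<in> carrier G" and rx: "\<rho> x = 1\<^sub>m k" using x by auto
    have rg: "\<rho> g \<in> carrier_mat k k" using rc g by auto
    have "\<rho> (g \<otimes> x \<otimes> inv g) = \<rho> (g \<otimes> x) * \<rho> (inv g)"
      by (rule rm[rule_format]) (use g xG in auto)
    also have "\<rho> (g \<otimes> x) = \<rho> g * \<rho> x" by (rule rm[rule_format, OF g xG])
    also have "\<rho> g * \<rho> x = \<rho> g" unfolding rx by (rule right_mult_one_mat[OF rg])
    also have "\<rho> g * \<rho> (inv g) = \<rho> (g \<otimes> inv g)" by (rule rm[rule_format, OF g inv_closed[OF g], symmetric])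
    also have "\<dots> = 1\<^sub>m k" using g r1 by simp
    finally show "g \<otimes> x \<otimes> inv g \<in> {g \<in> carrier G. \<rho> g = 1\<^sub>m k}" using g xG by simp
  qed
qed

lemma rep_pow:
  fixes G (structure) and \<tau> :: "'a \<Rightarrow> complex mat"
  assumes grp: "group G" and tc: "\<forall>g\<in>carrier G. \<tau> g \<in> carrier_mat n n"
    and t1: "\<tau> \<one> = 1\<^sub>m n"
    and tm: "\<forall>g\<in>carrier G. \<forall>h\<in>carrier G. \<tau> (g \<otimes> h) = \<tau> g * \<tau> h"
    and g: "g \<in> carrier G"
  shows "\<tau> (g [^] (k::nat)) = \<tau> g ^\<^sub>m k"
proof (induction k)
  case 0
  have "dim_row (\<tau> g) = n" using tc g by auto
  then show ?case using t1 by simp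
next
  case (Suc k)
  interpret group G by fact
  have "\<tau> (g [^] Suc k) = \<tau> (g [^] k \<otimes> g)" by simp
  also have "\<dots> = \<tau> (g [^] k) * \<tau> g" using tm g by simp
  finally show ?case using Suc by simp
qed

lemma key:
  fixes G (structure) and \<sigma> :: "'a \<Rightarrow> complex mat"
  assumes pg: "p_group G p" and cZ: "card (grp_center G) = p"
    and zZ: "z \<in> grp_center G" and z1: "z \<noteq> \<one>"
    and sc: "\<forall>g\<in>carrier G. \<sigma> g \<in> carrier_mat n n" and s1: "\<sigma> \<one> = 1\<^sub>m n"
    and sm: "\<forall>g\<in>carrier G. \<forall>h\<in>carrier G. \<sigma> (g \<otimes> h) = \<sigma> g * \<sigma> h"
    and pf: "\<forall>g\<in>carrier G. (\<exists>c. \<sigma> g = c \<cdot>\<^sub>m 1\<^sub>m n) \<longrightarrow> g = \<one>"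
  shows "\<exists>k<n. \<exists>\<rho>. ord_rep G k \<rho> \<and> faithful_ord G k \<rho>"
proof -
  from pg have grp: "group G" and fin: "finite (carrier G)" unfolding p_group_def by auto
  interpret group G by fact
  have zG: "z \<in> carrier G" using zZ unfolding grp_center_def by auto
  have zc: "\<forall>g\<in>carrier G. z \<otimes> g = g \<otimes> z" using zZ unfolding grp_center_def by auto
  define A where "A = \<sigma> z"
  have A: "A \<in> carrier_mat n n" using sc zG unfolding A_def by auto
  obtain as where "char_poly A = (\<Prod>a\<leftarrow>as. [:- a, 1:])" using char_poly_factorized[OF A] by auto
  from jordan_nf_exists[OF A this] obtain n_as where "jordan_nf A n_as" by auto
  then have "similar_mat A (jordan_matrix n_as)" unfolding jordan_nf_def by auto
  define J where "J = jordan_matrix n_as"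
  from similar_matD[OF \<open>similar_mat A (jordan_matrix n_as)\<close>] obtain n' P Q where
    PQ0: "{A, J, P, Q} \<subseteq> carrier_mat n' n'" "P * Q = 1\<^sub>m n'" "Q * P = 1\<^sub>m n'" "A = P * J * Q"
    unfolding J_def by blast
  have "n' = n" using PQ0(1) A by auto
  then have Jc: "J \<in> carrier_mat n n" and Pc: "P \<in> carrier_mat n n" and Qc: "Q \<in> carrier_mat n n"
    and PQ: "P * Q = 1\<^sub>m n" and QP: "Q * P = 1\<^sub>m n" and AJ: "A = P * J * Q" using PQ0 by auto
  have PQX: "P * (Q * X) = X" if "X \<in> carrier_mat n m" for X m
    using Pc Qc that PQ by (simp add: assoc_mult_mat[symmetric, of P n n Q n X m])
  have QPX: "Q * (P * X) = X" if "X \<in> carrier_mat n m" for X m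
    using Pc Qc that QP by (simp add: assoc_mult_mat[symmetric, of Q n n P n X m])
  define \<tau> where "\<tau> g = Q * (\<sigma> g * P)" for g
  have tc: "\<forall>g\<in>carrier G. \<tau> g \<in> carrier_mat n n" using sc Pc Qc unfolding \<tau>_def by auto
  have t1: "\<tau> \<one> = 1\<^sub>m n" unfolding \<tau>_def s1 using Pc QP by simp
  have tm: "\<forall>g\<in>carrier G. \<forall>h\<in>carrier G. \<tau> (g \<otimes> h) = \<tau> g * \<tau> h"
  proof (intro ballI)
    fix g h assume g: "g \<in> carrier G" and h: "h \<in> carrier G"
    have sg: "\<sigma> g \<in> carrier_mat n n" and sh: "\<sigma> h \<in> carrier_mat n n" using sc g h by auto
    have X: "\<sigma> g * P \<in> carrier_mat n n" and Y: "\<sigma> h * P \<in> carrier_mat n n" using sg sh Pc by auto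
    have QY: "Q * (\<sigma> h * P) \<in> carrier_mat n n" using Qc Y by auto
    have "\<tau> g * \<tau> h = Q * ((\<sigma> g * P) * (Q * (\<sigma> h * P)))"
      unfolding \<tau>_def by (rule assoc_mult_mat[OF Qc X QY])
    also have "(\<sigma> g * P) * (Q * (\<sigma> h * P)) = \<sigma> g * (P * (Q * (\<sigma> h * P)))"
      by (rule assoc_mult_mat[OF sg Pc QY])
    also have "P * (Q * (\<sigma> h * P)) = \<sigma> h * P" by (rule PQX[OF Y])
    also have "\<sigma> g * (\<sigma> h * P) = (\<sigma> g * \<sigma> h) * P" by (rule assoc_mult_mat[OF sg sh Pc, symmetric])
    also have "\<sigma> g * \<sigma> h = \<sigma> (g \<otimes> h)" using sm g h by simp
    finally show "\<tau> (g \<otimes> h) = \<tau> g * \<tau> h" unfolding \<tau>_def by simp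
  qed
  have tz: "\<tau> z = J"
  proof -
    have JQ: "J * Q \<in> carrier_mat n n" using Jc Qc by auto
    have "A * P = (P * J * Q) * P" using AJ by simp
    also have "P * J * Q = P * (J * Q)" by (rule assoc_mult_mat[OF Pc Jc Qc])
    also have "(P * (J * Q)) * P = P * ((J * Q) * P)" by (rule assoc_mult_mat[OF Pc JQ Pc])
    also have "(J * Q) * P = J * (Q * P)" by (rule assoc_mult_mat[OF Jc Qc Pc])
    also have "J * (Q * P) = J" using QP Jc by simp
    finally have "A * P = P * J" .
    then have "\<tau> z = Q * (P * J)" unfolding \<tau>_def A_def by simp
    also have "\<dots> = J" by (rule QPX[OF Jc])
    finally show ?thesis .
  qed
  define N where "N = order G"
  have N1: "N \<ge> 1" unfolding N_def using fin order_gt_0_iff_finite by (metis One_nat_def Suc_leI)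
  have "z [^] N = \<one>" unfolding N_def using pow_order_eq_1[OF zG] .
  then have "J ^\<^sub>m N = 1\<^sub>m n" using rep_pow[OF grp tc t1 tm zG, of N] tz t1 by simp
  moreover have nJ: "sum_list (map fst n_as) = n"
  proof -
    have "dim_row J = n" using Jc by auto
    then show ?thesis using jordan_matrix_dim(1)[of n_as] unfolding J_def by simp
  qed
  ultimately have dg: "\<forall>i<n. \<forall>j<n. i \<noteq> j \<longrightarrow> J $$ (i,j) = 0"
    using jordan_pow_one_diag[of n_as N] N1 unfolding J_def by auto
  have van0: "\<tau> g $$ (i,j) = 0" if g: "g \<in> carrier G" and i: "i < n" and j: "j < n"
    and ne: "J $$ (i,i) \<noteq> J $$ (j,j)" for g i j
  proof -
    have tg: "\<tau> g \<in> carrier_mat n n" using tc g by auto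
    have e1: "\<tau> (g \<otimes> z) = \<tau> g * \<tau> z" using tm g zG by blast
    have e2: "\<tau> (z \<otimes> g) = \<tau> z * \<tau> g" using tm g zG by blast
    have e3: "z \<otimes> g = g \<otimes> z" using zc g by blast
    have "\<tau> g * J = J * \<tau> g" using e1 e2 e3 tz by simp
    then have "(\<tau> g * J) $$ (i,j) = (J * \<tau> g) $$ (i,j)" by simp
    then have "\<tau> g $$ (i,j) * J $$ (j,j) = J $$ (i,i) * \<tau> g $$ (i,j)"
      using diag_right_mult[OF tg Jc dg i j] by simp
    then have "\<tau> g $$ (i,j) * (J $$ (j,j) - J $$ (i,i)) = 0" by (simp add: algebra_simps)
    then show ?thesis using ne by simp
  qed
  have Ascal: "\<exists>c. A = c \<cdot>\<^sub>m 1\<^sub>m n" if "J = lam \<cdot>\<^sub>m 1\<^sub>m n" for lam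
  proof -
    have "A = P * (lam \<cdot>\<^sub>m 1\<^sub>m n) * Q" using AJ that by simp
    also have "\<dots> = lam \<cdot>\<^sub>m (P * Q)" using Pc Qc
      by (simp add: mult_smult_distrib[of P n n _ n] mult_smult_assoc_mat[of _ n n Q n])
    finally have "A = lam \<cdot>\<^sub>m 1\<^sub>m n" using PQ by simp
    then show ?thesis by blast
  qed
  have notscal: "\<not> (\<exists>c. A = c \<cdot>\<^sub>m 1\<^sub>m n)" using pf zG z1 unfolding A_def by blast
  obtain i0 where i0: "i0 < n" "J $$ (i0,i0) \<noteq> 1"
  proof (rule ccontr)
    assume "\<not> thesis"
    then have d1: "\<forall>i<n. J $$ (i,i) = 1" using that by blast
    have "J = 1 \<cdot>\<^sub>m 1\<^sub>m n"
      by (rule eq_matI) (use Jc d1 dg in auto)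
    then show False using Ascal notscal by blast
  qed
  define lam where "lam = J $$ (i0,i0)"
  obtain j0 where j0: "j0 < n" "J $$ (j0,j0) \<noteq> lam"
  proof (rule ccontr)
    assume "\<not> thesis"
    then have d1: "\<forall>i<n. J $$ (i,i) = lam" using that by blast
    have "J = lam \<cdot>\<^sub>m 1\<^sub>m n"
      by (rule eq_matI) (use Jc d1 dg in auto)
    then show False using Ascal notscal by blast
  qed
  define S where "S = {i. i < n \<and> J $$ (i,i) = lam}"
  have Ssub: "S \<subseteq> {..<n}" unfolding S_def by auto
  have Sne: "S \<noteq> {}" using i0 unfolding S_def lam_def by auto
  have cardS: "card S < n"
  proof -
    have "S \<subset> {..<n}" using Ssub j0 unfolding S_def by auto
    then show ?thesis using psubset_card_mono[of "{..<n}" S] by simp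
  qed
  have van: "\<forall>g\<in>carrier G. \<forall>i<n. \<forall>j\<in>S. i \<notin> S \<longrightarrow> \<tau> g $$ (i,j) = 0"
    using van0 unfolding S_def by auto
  define xs where "xs = sorted_list_of_set S"
  define k where "k = card S"
  define R where "R g = mat k k (\<lambda>(a,b). \<tau> g $$ (xs ! a, xs ! b))" for g
  have ordR: "ord_rep G k R"
    using sub_rep[OF grp tc t1 tm Ssub Sne van] unfolding R_def k_def xs_def .
  have k1: "k \<ge> 1" using ordR unfolding ord_rep_def by auto
  have finS: "finite S" using Ssub finite_subset by blast
  have lxs: "length xs = k" unfolding xs_def k_def using finS by simp
  have sxs: "set xs = S" unfolding xs_def using finS by simp
  have x0: "xs ! 0 \<in> S" using nth_mem[of 0 xs] lxs sxs k1 by simp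
  have x0n: "xs ! 0 < n" using x0 Ssub by auto
  have Rz: "R z $$ (0,0) = lam" unfolding R_def using k1 tz x0 unfolding S_def by auto
  have zK: "z \<notin> {g \<in> carrier G. R g = 1\<^sub>m k}"
  proof
    assume "z \<in> {g \<in> carrier G. R g = 1\<^sub>m k}"
    then have "R z $$ (0,0) = 1" using k1 by auto
    then show False using Rz i0 lam_def by simp
  qed
  have Ktriv: "{g \<in> carrier G. R g = 1\<^sub>m k} = {\<one>}"
    using kernel_trivial[OF pg cZ ker_props(1)[OF grp ordR] ker_props(2)[OF grp ordR] zZ zK] .
  have "faithful_ord G k R" unfolding faithful_ord_def using Ktriv by blast
  then show ?thesis using ordR cardS k_def by blast
qed

lemma main_aux:
  fixes G (structure) and p :: nat
  assumes "p_group G p"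
    and "trivial_schur_multiplier G"
    and "card (grp_center G) = p"
  shows "\<not> (\<exists>n \<rho>. proj_rep G n \<rho> \<and> faithful_proj G n \<rho> \<and> irreducible_rep G n \<rho>)
         \<and> tau G = delta G + 1"
proof -
  note pg = assms(1) and ts = assms(2) and cZ = assms(3)
  from pg have grp: "group G" and fin: "finite (carrier G)" and pr: "prime p" unfolding p_group_def by auto
  interpret group G by fact
  have finZ: "finite (grp_center G)" by (rule finite_subset[OF center_sub fin])
  have "grp_center G \<noteq> {\<one>}"
  proof
    assume "grp_center G = {\<one>}"
    then have "p = 1" using cZ by simp
    then show False using pr by simp
  qed
  then obtain z where zZ: "z \<in> grp_center G" and z1: "z \<noteq> \<one>"
    using center_one[OF grp] by blast
  have part1: "\<not> (\<exists>n \<rho>. proj_rep G n \<rho> \<and> faithful_proj G n \<rho> \<and> irreducible_rep G n \<rho>)"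
  proof
    assume "\<exists>n \<rho>. proj_rep G n \<rho> \<and> faithful_proj G n \<rho> \<and> irreducible_rep G n \<rho>"
    then obtain n \<rho> where pr1: "proj_rep G n \<rho>" and fp: "faithful_proj G n \<rho>" and ir: "irreducible_rep G n \<rho>"
      by blast
    obtain \<beta> \<sigma> where b0: "\<forall>g\<in>carrier G. \<beta> g \<noteq> 0" and sc: "\<forall>g\<in>carrier G. \<sigma> g \<in> carrier_mat n n"
      and s1: "\<sigma> \<one> = 1\<^sub>m n" and sm: "\<forall>g\<in>carrier G. \<forall>h\<in>carrier G. \<sigma> (g \<otimes> h) = \<sigma> g * \<sigma> h"
      and rs: "\<forall>g\<in>carrier G. \<rho> g = \<beta> g \<cdot>\<^sub>m \<sigma> g"
      using rescale[OF grp pr1 ts] by blast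
    from ir have n1: "n \<ge> 1" and irr: "\<forall>W. invariant_subspace G n \<rho> W \<longrightarrow> W = {0\<^sub>v n} \<or> W = carrier_vec n"
      unfolding irreducible_rep_def by auto
    obtain c where c: "\<sigma> z = c \<cdot>\<^sub>m 1\<^sub>m n" using schur_center[OF grp n1 sc sm zZ irr rs] by blast
    have zG: "z \<in> carrier G" by (rule subsetD[OF center_sub zZ])
    have "\<rho> z = (\<beta> z * c) \<cdot>\<^sub>m 1\<^sub>m n" using rs zG c by (simp add: smult_smult_mat)
    then have "z = \<one>" using fp zG unfolding faithful_proj_def by blast
    then show False using z1 by simp
  qed
  define Pd where "Pd n = (\<exists>\<rho>. ord_rep G n \<rho> \<and> faithful_ord G n \<rho>)" for n
  define Pt where "Pt n = (\<exists>\<rho>. proj_rep G n \<rho> \<and> faithful_proj G n \<rho>)" for n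
  have dd: "delta G = (LEAST n. Pd n)" unfolding delta_def Pd_def ..
  have td: "tau G = (LEAST n. Pt n)" unfolding tau_def Pt_def ..
  have "\<exists>n. Pd n" using regular_rep[OF grp fin] unfolding Pd_def by blast
  then have "Pd (delta G)" unfolding dd by (rule LeastI_ex)
  then obtain \<rho>0 where "ord_rep G (delta G) \<rho>0" "faithful_ord G (delta G) \<rho>0" unfolding Pd_def by blast
  then have "Pt (delta G + 1)" unfolding Pt_def by (rule ext_rep[OF grp])
  then have le: "tau G \<le> delta G + 1" and "Pt (tau G)" unfolding td
    by (rule Least_le, rule LeastI)
  then obtain \<rho>1 where pr1: "proj_rep G (tau G) \<rho>1" and fp1: "faithful_proj G (tau G) \<rho>1"
    unfolding Pt_def by blast
  obtain \<beta> \<sigma> where b0: "\<forall>g\<in>carrier G. \<beta> g \<noteq> 0" and sc: "\<forall>g\<in>carrier G. \<sigma> g \<in> carrier_mat (tau G) (tau G)"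
    and s1: "\<sigma> \<one> = 1\<^sub>m (tau G)" and sm: "\<forall>g\<in>carrier G. \<forall>h\<in>carrier G. \<sigma> (g \<otimes> h) = \<sigma> g * \<sigma> h"
    and rs: "\<forall>g\<in>carrier G. \<rho>1 g = \<beta> g \<cdot>\<^sub>m \<sigma> g"
    using rescale[OF grp pr1 ts] by blast
  have pf: "\<forall>g\<in>carrier G. (\<exists>c. \<sigma> g = c \<cdot>\<^sub>m 1\<^sub>m (tau G)) \<longrightarrow> g = \<one>"
  proof (intro ballI impI)
    fix g assume g: "g \<in> carrier G" and "\<exists>c. \<sigma> g = c \<cdot>\<^sub>m 1\<^sub>m (tau G)"
    then obtain c where "\<sigma> g = c \<cdot>\<^sub>m 1\<^sub>m (tau G)" by blast
    then have "\<rho>1 g = (\<beta> g * c) \<cdot>\<^sub>m 1\<^sub>m (tau G)" using rs g by (simp add: smult_smult_mat)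
    then show "g = \<one>" using fp1 g unfolding faithful_proj_def by blast
  qed
  obtain k where k: "k < tau G" "Pd k"
    using key[OF pg cZ zZ z1 sc s1 sm pf] unfolding Pd_def by blast
  have "delta G \<le> k" unfolding dd using k(2) by (rule Least_le)
  then have "tau G = delta G + 1" using k(1) le by simp
  then show ?thesis using part1 by simp
qed

theorem lemma4p2:
  fixes G :: "('a, 'b) monoid_scheme" and p :: nat
  assumes "p_group G p"
    and "trivial_schur_multiplier G"
    and "card (grp_center G) = p"
  shows "\<not> (\<exists>n \<rho>. proj_rep G n \<rho> \<and> faithful_proj G n \<rho> \<and> irreducible_rep G n \<rho>)
         \<and> tau G = delta G + 1"
  using main_aux[OF assms] .

end
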